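(* Let $X\in\mathbb{R}^{m\times n}$ be fixed, $V=\frac1nXX^\top$, $W^K,W^Q\in\mathbb{R}^{n\times n_k}$ with i.i.d. $\mathcal N(0,1)$ entries, $Y=\frac1nXW^KW^{Q,\top}X^\top$, $\tau>0$, and $A=I+\mathrm{Softmax}(\tau^{-1}Y)-\frac1m\mathbf 1\mathbf 1^\top$ (Softmax row-wise). Then $$\mathbb{E}[A^{\alpha\delta}A^{\beta\omega}]=\delta_{\alpha\delta}\delta_{\beta\omega}+\frac{n_k}{\tau^2m^2}S_1^{\alpha\delta,\beta\omega}+\frac{n_k}{2\tau^2m}\big(\delta_{\beta\omega}S_2^{\alpha\delta}+\delta_{\alpha\delta}S_2^{\beta\omega}\big)+O(n_k\tau^{-3}).$$
   Context: $\delta_{\alpha\beta}$ is the Kronecker delta. With $V^{\alpha\bar x}=\frac1m\sum_\nu V^{\alpha\nu}$, $V^{\bar x\bar x}=\frac1{m^2}\sum_{\nu,\kappa}V^{\nu\kappa}$, $\bar V=\frac1m\sum_\nu V^{\nu\nu}$: $S_1^{\alpha\delta,\beta\omega}=V^{\alpha\beta}(V^{\delta\omega}-V^{\delta\bar x}-V^{\omega\bar x}+V^{\bar x\bar x})$ and $S_2^{\alpha\delta}=V^{\alpha\alpha}(V^{\delta\delta}-2V^{\delta\bar x}+2V^{\bar x\bar x}-\bar V)$. $O(n_k\tau^{-3})$ denotes a remainder bounded by a constant (independent of $\tau$) times $n_k\tau^{-3}$ as $\tau\to\infty$. *)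

theory Defs
  imports "HOL-Probability.Probability"
begin

(* The Gaussian weights W^K, W^Q in R^{n x nk} are encoded as one point
   w of a product space indexed by (b, i, k) :: bool * nat * nat, with
   W^K i k = w (True, i, k) and W^Q i k = w (False, i, k). *)

definition gauss_weights :: "nat \<Rightarrow> nat \<Rightarrow> (bool \<times> nat \<times> nat \<Rightarrow> real) measure" where
  "gauss_weights n nk =
     (\<Pi>\<^sub>M ijk \<in> (UNIV :: bool set) \<times> {..<n} \<times> {..<nk}. density lborel std_normal_density)"

definition WK :: "(bool \<times> nat \<times> nat \<Rightarrow> real) \<Rightarrow> nat \<Rightarrow> nat \<Rightarrow> real" where
  "WK w i k = w (True, i, k)"

definition WQ :: "(bool \<times> nat \<times> nat \<Rightarrow> real) \<Rightarrow> nat \<Rightarrow> nat \<Rightarrow> real" where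
  "WQ w i k = w (False, i, k)"

definition kdelta :: "nat \<Rightarrow> nat \<Rightarrow> real" where
  "kdelta a b = (if a = b then 1 else 0)"

definition Vmat :: "nat \<Rightarrow> (nat \<Rightarrow> nat \<Rightarrow> real) \<Rightarrow> nat \<Rightarrow> nat \<Rightarrow> real" where
  "Vmat n X a b = (1 / real n) * (\<Sum>i<n. X a i * X b i)"

definition Ymat :: "nat \<Rightarrow> nat \<Rightarrow> (nat \<Rightarrow> nat \<Rightarrow> real) \<Rightarrow> (bool \<times> nat \<times> nat \<Rightarrow> real)
                    \<Rightarrow> nat \<Rightarrow> nat \<Rightarrow> real" where
  "Ymat n nk X w a b =
     (1 / real n) * (\<Sum>i<n. \<Sum>j<n. \<Sum>k<nk. X a i * WK w i k * WQ w j k * X b j)"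

definition softmax_rows :: "nat \<Rightarrow> (nat \<Rightarrow> nat \<Rightarrow> real) \<Rightarrow> nat \<Rightarrow> nat \<Rightarrow> real" where
  "softmax_rows m M a b = exp (M a b) / (\<Sum>c<m. exp (M a c))"

definition Amat :: "nat \<Rightarrow> nat \<Rightarrow> nat \<Rightarrow> (nat \<Rightarrow> nat \<Rightarrow> real) \<Rightarrow> real
                    \<Rightarrow> (bool \<times> nat \<times> nat \<Rightarrow> real) \<Rightarrow> nat \<Rightarrow> nat \<Rightarrow> real" where
  "Amat m n nk X tau w a b =
     kdelta a b + softmax_rows m (\<lambda>c d. Ymat n nk X w c d / tau) a b - 1 / real m"

definition Vxbar :: "nat \<Rightarrow> nat \<Rightarrow> (nat \<Rightarrow> nat \<Rightarrow> real) \<Rightarrow> nat \<Rightarrow> real" where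
  "Vxbar m n X a = (1 / real m) * (\<Sum>v<m. Vmat n X a v)"

definition Vxbarxbar :: "nat \<Rightarrow> nat \<Rightarrow> (nat \<Rightarrow> nat \<Rightarrow> real) \<Rightarrow> real" where
  "Vxbarxbar m n X = (1 / (real m)^2) * (\<Sum>v<m. \<Sum>c<m. Vmat n X v c)"

definition Vbar :: "nat \<Rightarrow> nat \<Rightarrow> (nat \<Rightarrow> nat \<Rightarrow> real) \<Rightarrow> real" where
  "Vbar m n X = (1 / real m) * (\<Sum>v<m. Vmat n X v v)"

definition S1 :: "nat \<Rightarrow> nat \<Rightarrow> (nat \<Rightarrow> nat \<Rightarrow> real) \<Rightarrow> nat \<Rightarrow> nat \<Rightarrow> nat \<Rightarrow> nat \<Rightarrow> real" where
  "S1 m n X a d b w =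
     Vmat n X a b * (Vmat n X d w - Vxbar m n X d - Vxbar m n X w + Vxbarxbar m n X)"

definition S2 :: "nat \<Rightarrow> nat \<Rightarrow> (nat \<Rightarrow> nat \<Rightarrow> real) \<Rightarrow> nat \<Rightarrow> nat \<Rightarrow> real" where
  "S2 m n X a d =
     Vmat n X a a * (Vmat n X d d - 2 * Vxbar m n X d + 2 * Vxbarxbar m n X - Vbar m n X)"

end

theory Submission
  imports Defs
begin

abbreviation N1 :: "real measure" where "N1 \<equiv> density lborel std_normal_density"

lemma N1_prob: "prob_space N1"
  by (rule prob_space_normal_density) simp

lemma N1_int_pow: "integrable N1 (\<lambda>t. t ^ k)"
  by (subst integrable_density) (auto simp: normal_density_nonneg integrable_std_normal_moment)

lemma N1_integral_pow: "(\<integral>t. t ^ k \<partial>N1) = (\<integral>t. std_normal_density t * t ^ k \<partial>lborel)"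
  by (subst integral_density) (auto simp: normal_density_nonneg)

lemma gm0: "(\<integral>t. t ^ 0 \<partial>N1) = 1"
  using prob_space.prob_space[OF N1_prob] by (simp add: prob_space.prob_space measure_def)

lemma gm1: "(\<integral>t. t ^ 1 \<partial>N1) = 0"
  using integral_std_normal_moment_odd[of 0] by (simp add: N1_integral_pow[of 1, simplified])

lemma gm2: "(\<integral>t. t ^ 2 \<partial>N1) = 1"
  using integral_std_normal_moment_even[of 1] by (simp add: N1_integral_pow)

definition II :: "nat \<Rightarrow> nat \<Rightarrow> (bool \<times> nat \<times> nat) set" where
  "II n nk = (UNIV :: bool set) \<times> {..<n} \<times> {..<nk}"

lemma II_finite: "finite (II n nk)" by (simp add: II_def)

lemma gw_def: "gauss_weights n nk = PiM (II n nk) (\<lambda>_. N1)"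
  by (simp add: gauss_weights_def II_def)

lemma pps: "product_prob_space (\<lambda>_. N1)"
  unfolding product_prob_space_def product_prob_space_axioms_def product_sigma_finite_def
  using N1_prob prob_space_imp_sigma_finite by blast

lemma gw_prob: "prob_space (gauss_weights n nk)"
  unfolding gw_def by (intro prob_space_PiM N1_prob)

lemma monomial_integral:
  fixes c :: "bool \<times> nat \<times> nat \<Rightarrow> nat"
  shows "(\<integral>w. (\<Prod>q\<in>II n nk. w q ^ c q) \<partial>gauss_weights n nk) = (\<Prod>q\<in>II n nk. \<integral>t. t ^ c q \<partial>N1)"
    and "integrable (gauss_weights n nk) (\<lambda>w. \<Prod>q\<in>II n nk. w q ^ c q)"
proof -
  interpret product_prob_space "\<lambda>_. N1" by (rule pps)
  show "(\<integral>w. (\<Prod>q\<in>II n nk. w q ^ c q) \<partial>gauss_weights n nk) = (\<Prod>q\<in>II n nk. \<integral>t. t ^ c q \<partial>N1)"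
    unfolding gw_def
    using product_integral_prod[of "II n nk" "\<lambda>q t. t ^ c q"] II_finite N1_int_pow by simp
  show "integrable (gauss_weights n nk) (\<lambda>w. \<Prod>q\<in>II n nk. w q ^ c q)"
    unfolding gw_def
    using product_integrable_prod[of "II n nk" "\<lambda>q t. t ^ c q"] II_finite N1_int_pow by simp
qed

definition ind :: "bool \<times> nat \<times> nat \<Rightarrow> bool \<times> nat \<times> nat \<Rightarrow> nat" where
  "ind p q = (if q = p then 1 else 0)"

lemma prod_ind:
  assumes "p \<in> II n nk"
  shows "(\<Prod>q\<in>II n nk. (w q::real) ^ ind p q) = w p"
proof -
  have "(\<Prod>q\<in>II n nk. w q ^ ind p q) = (\<Prod>q\<in>II n nk. if q = p then w q else 1)"
    by (rule prod.cong) (auto simp: ind_def)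
  also have "\<dots> = w p" using assms II_finite by (simp add: prod.delta')
  finally show ?thesis .
qed

lemma four_moment:
  fixes i j i' j' k k' :: nat
  assumes "i < n" "j < n" "i' < n" "j' < n" "k < nk" "k' < nk"
  shows "(\<integral>w. w (True,i,k) * w (False,j,k) * w (True,i',k') * w (False,j',k') \<partial>gauss_weights n nk)
        = (if i = i' \<and> k = k' then 1 else 0) * (if j = j' \<and> k = k' then 1 else 0)"
    and "integrable (gauss_weights n nk) (\<lambda>w. w (True,i,k) * w (False,j,k) * w (True,i',k') * w (False,j',k'))"
proof -
  define p1 where "p1 = (True,i,k)"
  define p2 where "p2 = (False,j,k)"
  define p3 where "p3 = (True,i',k')"
  define p4 where "p4 = (False,j',k')"
  have mem: "p1 \<in> II n nk" "p2 \<in> II n nk" "p3 \<in> II n nk" "p4 \<in> II n nk"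
    using assms by (auto simp: II_def p1_def p2_def p3_def p4_def)
  define c where "c q = ind p1 q + ind p2 q + ind p3 q + ind p4 q" for q
  have eq: "(\<Prod>q\<in>II n nk. (w q::real) ^ c q) = w p1 * w p2 * w p3 * w p4" for w
    unfolding c_def power_add prod.distrib using mem by (simp add: prod_ind)
  have I: "integrable (gauss_weights n nk) (\<lambda>w. \<Prod>q\<in>II n nk. w q ^ c q)"
    by (rule monomial_integral(2))
  then show "integrable (gauss_weights n nk) (\<lambda>w. w (True,i,k) * w (False,j,k) * w (True,i',k') * w (False,j',k'))"
    unfolding eq p1_def p2_def p3_def p4_def .
  have V: "(\<integral>w. w p1 * w p2 * w p3 * w p4 \<partial>gauss_weights n nk) = (\<Prod>q\<in>II n nk. \<integral>t. t ^ c q \<partial>N1)"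
    using monomial_integral(1)[of n nk c] unfolding eq .
  have d12: "p1 \<noteq> p2" "p1 \<noteq> p4" "p3 \<noteq> p2" "p3 \<noteq> p4"
    by (auto simp: p1_def p2_def p3_def p4_def)
  show "(\<integral>w. w (True,i,k) * w (False,j,k) * w (True,i',k') * w (False,j',k') \<partial>gauss_weights n nk)
        = (if i = i' \<and> k = k' then 1 else 0) * (if j = j' \<and> k = k' then 1 else 0)"
  proof (cases "p1 = p3 \<and> p2 = p4")
    case True
    then have "i = i' \<and> k = k'" "j = j' \<and> k = k'" by (auto simp: p1_def p2_def p3_def p4_def)
    moreover have "(\<Prod>q\<in>II n nk. \<integral>t. t ^ c q \<partial>N1) = 1"
    proof (rule prod.neutral, intro ballI)
      fix q assume "q \<in> II n nk"
      show "(\<integral>t. t ^ c q \<partial>N1) = 1"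
        using True d12 gm0 gm2[unfolded power2_eq_square] by (cases "q = p1"; cases "q = p2") (auto simp: c_def ind_def)
    qed
    ultimately show ?thesis using V by (simp add: p1_def p2_def p3_def p4_def)
  next
    case False
    have "\<exists>r\<in>II n nk. c r = 1"
    proof (cases "p1 = p3")
      case True
      then have "p2 \<noteq> p4" using False by auto
      then show ?thesis using d12 mem by (intro bexI[of _ p2]) (auto simp: c_def ind_def)
    next
      case False
      then show ?thesis using d12 mem by (intro bexI[of _ p1]) (auto simp: c_def ind_def)
    qed
    then obtain r where r: "r \<in> II n nk" "c r = 1" by blast
    have "(\<Prod>q\<in>II n nk. \<integral>t. t ^ c q \<partial>N1) = 0"
      using r gm1 II_finite by (intro prod_zero) (auto intro!: bexI[of _ r])
    moreover have "\<not> (i = i' \<and> k = k' \<and> j = j')"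
      using False by (auto simp: p1_def p2_def p3_def p4_def)
    ultimately show ?thesis using V by (auto simp: p1_def p2_def p3_def p4_def)
  qed
qed

definition Yg :: "nat \<Rightarrow> nat \<Rightarrow> (nat \<Rightarrow> nat \<Rightarrow> real) \<Rightarrow> (nat \<Rightarrow> nat \<Rightarrow> real) \<Rightarrow> (bool \<times> nat \<times> nat \<Rightarrow> real) \<Rightarrow> nat \<Rightarrow> nat \<Rightarrow> real" where
  "Yg n nk X1 X2 w a b = (\<Sum>i<n. \<Sum>j<n. \<Sum>k<nk. (X1 a i * X2 b j / real n) * (w (True,i,k) * w (False,j,k)))"

definition Vg :: "nat \<Rightarrow> (nat \<Rightarrow> nat \<Rightarrow> real) \<Rightarrow> (nat \<Rightarrow> nat \<Rightarrow> real) \<Rightarrow> nat \<Rightarrow> nat \<Rightarrow> real" where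
  "Vg n X1 X2 a c = (1 / real n) * (\<Sum>i<n. X1 a i * X2 c i)"

lemma Ymat_Yg: "Ymat n nk X w a b = Yg n nk X X w a b"
  by (simp add: Ymat_def Yg_def WK_def WQ_def sum_distrib_left mult_ac)


lemma YY_hbi:
  "has_bochner_integral (gauss_weights n nk)
    (\<lambda>w. Yg n nk X1 X2 w a b * Yg n nk X3 X4 w c d)
    (\<Sum>i<n. \<Sum>j<n. \<Sum>k<nk. \<Sum>i'<n. \<Sum>j'<n. \<Sum>k'<nk.
       (X1 a i * X2 b j / real n) * (X3 c i' * X4 d j' / real n) *
       ((if i = i' \<and> k = k' then 1 else 0) * (if j = j' \<and> k = k' then 1 else 0)))"
proof -
  have eq: "Yg n nk X1 X2 w a b * Yg n nk X3 X4 w c d =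
    (\<Sum>i<n. \<Sum>j<n. \<Sum>k<nk. \<Sum>i'<n. \<Sum>j'<n. \<Sum>k'<nk.
       (X1 a i * X2 b j / real n) * (X3 c i' * X4 d j' / real n) *
       (w (True,i,k) * w (False,j,k) * w (True,i',k') * w (False,j',k')))" for w
    unfolding Yg_def sum_distrib_right unfolding sum_distrib_left
    by (intro sum.cong refl) (simp add: mult_ac)
  show ?thesis unfolding eq
    by (intro has_bochner_integral_sum has_bochner_integral_mult_right)
       (auto simp: has_bochner_integral_iff four_moment)
qed

lemma YY_val:
  "(\<Sum>i<n. \<Sum>j<n. \<Sum>k<nk. \<Sum>i'<n. \<Sum>j'<n. \<Sum>k'<nk.
       (X1 a i * X2 b j / real n) * (X3 c i' * X4 d j' / real n) *
       ((if i = i' \<and> k = k' then 1 else 0) * (if j = j' \<and> k = k' then 1 else 0)))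
   = real nk * Vg n X1 X3 a c * Vg n X2 X4 b d"
proof -
  have "(\<Sum>i<n. \<Sum>j<n. \<Sum>k<nk. \<Sum>i'<n. \<Sum>j'<n. \<Sum>k'<nk.
       (X1 a i * X2 b j / real n) * (X3 c i' * X4 d j' / real n) *
       ((if i = i' \<and> k = k' then 1 else 0) * (if j = j' \<and> k = k' then 1 else 0)))
     = (\<Sum>i<n. \<Sum>j<n. \<Sum>k<nk. (X1 a i * X2 b j / real n) * (X3 c i * X4 d j / real n))"
  proof (intro sum.cong refl)
    fix i j k assume "i \<in> {..<n}" "j \<in> {..<n}" "k \<in> {..<nk}"
    then show "(\<Sum>i'<n. \<Sum>j'<n. \<Sum>k'<nk.
       (X1 a i * X2 b j / real n) * (X3 c i' * X4 d j' / real n) *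
       ((if i = i' \<and> k = k' then 1 else 0) * (if j = j' \<and> k = k' then 1 else 0)))
      = (X1 a i * X2 b j / real n) * (X3 c i * X4 d j / real n)"
    proof -
      have "(\<Sum>i'<n. \<Sum>j'<n. \<Sum>k'<nk.
       (X1 a i * X2 b j / real n) * (X3 c i' * X4 d j' / real n) *
       ((if i = i' \<and> k = k' then 1 else 0) * (if j = j' \<and> k = k' then 1 else 0)))
       = (\<Sum>i'<n. \<Sum>j'<n. \<Sum>k'<nk. if k' = k then (if j' = j then (if i' = i then
           (X1 a i * X2 b j / real n) * (X3 c i' * X4 d j' / real n) else 0) else 0) else 0)"
        by (intro sum.cong refl) auto
      also have "\<dots> = (X1 a i * X2 b j / real n) * (X3 c i * X4 d j / real n)"
        using \<open>i \<in> {..<n}\<close> \<open>j \<in> {..<n}\<close> \<open>k \<in> {..<nk}\<close> by (simp add: sum.delta)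
      finally show ?thesis .
    qed
  qed
  also have "\<dots> = real nk * Vg n X1 X3 a c * Vg n X2 X4 b d"
    by (simp add: Vg_def sum_distrib_left sum_distrib_right mult_ac)
  finally show ?thesis .
qed

lemma EYY: "(\<integral>w. Yg n nk X1 X2 w a b * Yg n nk X3 X4 w c d \<partial>gauss_weights n nk)
   = real nk * Vg n X1 X3 a c * Vg n X2 X4 b d"
  and intYY: "integrable (gauss_weights n nk) (\<lambda>w. Yg n nk X1 X2 w a b * Yg n nk X3 X4 w c d)"
  using YY_hbi[of n nk X1 X2 a b X3 X4 c d] unfolding YY_val
  by (auto simp: has_bochner_integral_iff)

lemma exp_rem:
  fixes x :: real assumes "\<bar>x\<bar> \<le> 1"
  shows "\<bar>exp x - (1 + x + x^2/2)\<bar> \<le> \<bar>x\<bar>^3 / 2"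
proof -
  obtain t where t: "\<bar>t\<bar> \<le> \<bar>x\<bar>" "exp x = (\<Sum>m<3. (x ^ m) / fact m) + (exp t / fact 3) * x ^ 3"
    using Maclaurin_exp_le[of x 3] by blast
  have s: "(\<Sum>m<3. (x ^ m) / fact m) = 1 + x + x^2/2"
    by (simp add: eval_nat_numeral fact_numeral)
  have "exp t \<le> exp 1" using t(1) assms by simp
  also have "\<dots> \<le> 3" by (rule exp_le)
  finally have et: "exp t \<le> 3" .
  have "\<bar>exp x - (1 + x + x^2/2)\<bar> = exp t / 6 * \<bar>x\<bar>^3"
    using t(2) s by (simp add: fact_numeral abs_mult power_abs)
  also have "\<dots> \<le> 3 / 6 * \<bar>x\<bar>^3"
    using et by (intro mult_right_mono divide_right_mono) auto
  finally show ?thesis by simp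
qed

definition zbar :: "nat \<Rightarrow> (nat \<Rightarrow> real) \<Rightarrow> real" where
  "zbar m z = (1 / real m) * (\<Sum>c<m. z c)"

definition lin :: "nat \<Rightarrow> (nat \<Rightarrow> real) \<Rightarrow> nat \<Rightarrow> real" where
  "lin m z d = (z d - zbar m z) / real m"

definition quad :: "nat \<Rightarrow> (nat \<Rightarrow> real) \<Rightarrow> nat \<Rightarrow> real" where
  "quad m z d = ((z d - zbar m z)^2 - (1 / real m) * (\<Sum>c<m. (z c - zbar m z)^2)) / (2 * real m)"

lemma alg_id:
  fixes m zb Z1 Z2 V l q zd Ed SE :: real
  assumes "m \<noteq> 0" "zb = Z1/m" "V = Z2/m - zb^2" "l = (zd - zb)/m" "q = ((zd-zb)^2 - V)/(2*m)"
  shows "(1 + zd + zd^2/2 + Ed) - (1/m+l+q)*(m + Z1 + Z2/2 + SE)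
       = Ed - (1/m+l+q)*SE - l*Z2/2 - q*Z1 - q*Z2/2"
  using assms(1) unfolding assms(5) assms(4) assms(3) assms(2)
  by (simp add: field_simps power2_eq_square)

lemma zb_bound:
  assumes "m > 0" "\<forall>c<m. \<bar>z c\<bar> \<le> u"
  shows "\<bar>zbar m z\<bar> \<le> u"
proof -
  have "\<bar>\<Sum>c<m. z c\<bar> \<le> (\<Sum>c<m. \<bar>z c\<bar>)" by (rule sum_abs)
  also have "\<dots> \<le> (\<Sum>c<m. u)" using assms by (intro sum_mono) auto
  finally have "\<bar>\<Sum>c<m. z c\<bar> \<le> real m * u" by simp
  then show ?thesis using assms(1) by (simp add: zbar_def abs_mult field_simps)
qed

lemma var_bounds:
  assumes "m > 0" "\<forall>c<m. \<bar>z c\<bar> \<le> u"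
  shows "0 \<le> (1 / real m) * (\<Sum>c<m. (z c - zbar m z)^2)"
    and "(1 / real m) * (\<Sum>c<m. (z c - zbar m z)^2) \<le> 4 * u^2"
proof -
  show "0 \<le> (1 / real m) * (\<Sum>c<m. (z c - zbar m z)^2)" by (intro mult_nonneg_nonneg sum_nonneg) auto
  have zb: "\<bar>zbar m z\<bar> \<le> u" by (rule zb_bound[OF assms])
  have "(z c - zbar m z)^2 \<le> (2*u)^2" if "c < m" for c
  proof -
    have "\<bar>z c - zbar m z\<bar> \<le> 2*u" using assms(2) that zb by auto
    then show ?thesis by (metis abs_ge_zero abs_le_square_iff abs_mult_self_eq power_mono power2_eq_square)
  qed
  then have "(\<Sum>c<m. (z c - zbar m z)^2) \<le> (\<Sum>c<m. (2*u)^2)" by (intro sum_mono) auto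
  then show "(1 / real m) * (\<Sum>c<m. (z c - zbar m z)^2) \<le> 4 * u^2"
    using assms(1) by (simp add: field_simps power2_eq_square)
qed

lemma lin_bound:
  assumes "m > 0" "\<forall>c<m. \<bar>z c\<bar> \<le> u" "d < m"
  shows "\<bar>lin m z d\<bar> \<le> 2 * u / real m" and "\<bar>lin m z d\<bar> \<le> 2 * u"
proof -
  have zb: "\<bar>zbar m z\<bar> \<le> u" by (rule zb_bound[OF assms(1,2)])
  have "\<bar>z d - zbar m z\<bar> \<le> 2*u" using assms zb by auto
  then show 1: "\<bar>lin m z d\<bar> \<le> 2 * u / real m" using assms(1) by (simp add: lin_def divide_right_mono)
  have "0 \<le> u" using assms by (meson abs_ge_zero order_trans)
  then have "2 * u / real m \<le> 2 * u / 1" using assms(1)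
    by (intro divide_left_mono) auto
  then show "\<bar>lin m z d\<bar> \<le> 2 * u" using 1 by linarith
qed

lemma quad_bound:
  assumes "m > 0" "\<forall>c<m. \<bar>z c\<bar> \<le> u" "d < m"
  shows "\<bar>quad m z d\<bar> \<le> 2 * u^2 / real m" and "\<bar>quad m z d\<bar> \<le> 2 * u^2"
proof -
  have zb: "\<bar>zbar m z\<bar> \<le> u" by (rule zb_bound[OF assms(1,2)])
  have "\<bar>z d - zbar m z\<bar> \<le> 2*u" using assms zb by auto
  then have "(z d - zbar m z)^2 \<le> (2*u)^2"
    by (metis abs_ge_zero abs_mult_self_eq power_mono power2_eq_square)
  then have a: "(z d - zbar m z)^2 \<le> 4 * u^2" by (simp add: power_mult_distrib)
  have V: "0 \<le> (1 / real m) * (\<Sum>c<m. (z c - zbar m z)^2)" "(1 / real m) * (\<Sum>c<m. (z c - zbar m z)^2) \<le> 4 * u^2"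
    using var_bounds[OF assms(1,2)] by auto
  have "\<bar>(z d - zbar m z)^2 - (1 / real m) * (\<Sum>c<m. (z c - zbar m z)^2)\<bar> \<le> 4 * u^2"
    unfolding abs_le_iff using a V zero_le_power2[of "z d - zbar m z"] by linarith
  then show 1: "\<bar>quad m z d\<bar> \<le> 2 * u^2 / real m" using assms(1)
    by (simp add: quad_def abs_div field_simps)
  have "2 * u^2 / real m \<le> 2 * u^2 / 1" using assms(1)
    by (intro divide_left_mono) auto
  then show "\<bar>quad m z d\<bar> \<le> 2 * u^2" using 1 by linarith
qed

lemma var_eq:
  assumes "m > 0"
  shows "(1 / real m) * (\<Sum>c<m. (z c - zbar m z)^2) = (\<Sum>c<m. (z c)^2) / real m - (zbar m z)^2"
proof -
  have "(\<Sum>c<m. (z c - zbar m z)^2) = (\<Sum>c<m. (z c)^2) - 2 * zbar m z * (\<Sum>c<m. z c) + real m * (zbar m z)^2"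
    by (simp add: power2_diff sum.distrib sum_subtractf sum_distrib_left mult_ac)
  also have "(\<Sum>c<m. z c) = real m * zbar m z" using assms by (simp add: zbar_def)
  finally show ?thesis using assms by (simp add: field_simps power2_eq_square)
qed

lemma soft_taylor:
  assumes m: "m > 0" and d: "d < m" and zu: "\<forall>c<m. \<bar>z c\<bar> \<le> u" and u1: "u \<le> 1"
  shows "\<bar>exp (z d) / (\<Sum>c<m. exp (z c)) - (1 / real m + lin m z d + quad m z d)\<bar> \<le> 21 * u^3"
proof -
  define M where "M = real m"
  have M0: "M > 0" "M \<ge> 1" using m by (auto simp: M_def)
  have u0: "0 \<le> u" using zu m by (meson abs_ge_zero order_trans)
  define E where "E x = exp x - (1 + x + x^2/2)" for x :: real
  have Eb: "\<bar>E (z c)\<bar> \<le> u^3 / 2" if "c < m" for c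
  proof -
    have "\<bar>z c\<bar> \<le> 1" using zu that u1 by force
    then have "\<bar>E (z c)\<bar> \<le> \<bar>z c\<bar>^3/2" unfolding E_def by (rule exp_rem)
    also have "\<dots> \<le> u^3/2" using zu that by (auto intro!: power_mono)
    finally show ?thesis .
  qed
  define Z1 where "Z1 = (\<Sum>c<m. z c)"
  define Z2 where "Z2 = (\<Sum>c<m. (z c)^2)"
  define SE where "SE = (\<Sum>c<m. E (z c))"
  define zb where "zb = zbar m z"
  define V where "V = (1 / real m) * (\<Sum>c<m. (z c - zbar m z)^2)"
  define l where "l = lin m z d"
  define q where "q = quad m z d"
  define S where "S = (\<Sum>c<m. exp (z c))"
  have "SE = S - (M + Z1 + Z2/2)"
    unfolding SE_def E_def S_def M_def Z1_def Z2_def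
    by (simp add: sum_subtractf sum.distrib sum_divide_distrib)
  then have S_eq: "S = M + Z1 + Z2/2 + SE" by simp
  have ed: "exp (z d) = 1 + z d + (z d)^2/2 + E (z d)" by (simp add: E_def)
  have num: "exp (z d) - (1/M + l + q) * S = E (z d) - (1/M+l+q)*SE - l*Z2/2 - q*Z1 - q*Z2/2"
    unfolding ed S_eq
    by (rule alg_id) (use M0 var_eq[OF m, of z] in \<open>auto simp: zb_def zbar_def Z1_def M_def V_def l_def lin_def q_def quad_def Z2_def\<close>)
  have zbb: "\<bar>zb\<bar> \<le> u" unfolding zb_def by (rule zb_bound[OF m zu])
  have Z1b: "\<bar>Z1\<bar> \<le> M * u"
  proof -
    have "\<bar>Z1\<bar> \<le> (\<Sum>c<m. \<bar>z c\<bar>)" unfolding Z1_def by (rule sum_abs)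
    also have "\<dots> \<le> (\<Sum>c<m. u)" using zu by (intro sum_mono) auto
    finally show ?thesis by (simp add: M_def)
  qed
  have Z2b: "0 \<le> Z2" "Z2 \<le> M * u^2"
  proof -
    show "0 \<le> Z2" unfolding Z2_def by (intro sum_nonneg) auto
    have "Z2 \<le> (\<Sum>c<m. u^2)" unfolding Z2_def using zu
      by (intro sum_mono) (metis abs_ge_zero lessThan_iff power2_abs power_mono)
    then show "Z2 \<le> M * u^2" by (simp add: M_def)
  qed
  have SEb: "\<bar>SE\<bar> \<le> M * (u^3/2)"
  proof -
    have "\<bar>SE\<bar> \<le> (\<Sum>c<m. \<bar>E (z c)\<bar>)" unfolding SE_def by (rule sum_abs)
    also have "\<dots> \<le> (\<Sum>c<m. u^3/2)" using Eb by (intro sum_mono) auto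
    finally show ?thesis by (simp add: M_def)
  qed
  have lb: "\<bar>l\<bar> \<le> 2 * u / M" using lin_bound(1)[OF m zu d] by (simp add: l_def M_def)
  have qb: "\<bar>q\<bar> \<le> 2 * u^2 / M" using quad_bound(1)[OF m zu d] by (simp add: q_def M_def)
  have u2: "u^2 \<le> 1" "u^3 \<le> u^2" "u^4 \<le> u^3" using u0 u1
    by (auto simp: power_le_one eval_nat_numeral mult_left_le_one_le mult_le_one)
  have ab: "\<bar>1/M + l + q\<bar> \<le> 5 / M"
  proof -
    have "0 < 1/M" using M0 by simp
    then have "\<bar>1/M + l + q\<bar> \<le> 1/M + 2*u/M + 2*u^2/M"
      using lb[unfolded abs_le_iff] qb[unfolded abs_le_iff] unfolding abs_le_iff by linarith
    also have "\<dots> \<le> 1/M + 2/M + 2/M" using u1 u2 M0 by (intro add_mono divide_right_mono) auto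
    finally show ?thesis by simp
  qed
  have t1: "\<bar>(1/M+l+q)*SE\<bar> \<le> 5/2 * u^3"
  proof -
    have "\<bar>(1/M+l+q)*SE\<bar> \<le> (5/M) * (M * (u^3/2))" unfolding abs_mult
      using ab SEb M0 by (intro mult_mono) auto
    then show ?thesis using M0 by simp
  qed
  have t2: "\<bar>l*Z2/2\<bar> \<le> u^3"
  proof -
    have "\<bar>l*Z2\<bar> \<le> (2*u/M) * (M * u^2)" unfolding abs_mult
      using lb Z2b M0 u0 by (intro mult_mono) auto
    then show ?thesis using M0 by (simp add: power3_eq_cube power2_eq_square)
  qed
  have t3: "\<bar>q*Z1\<bar> \<le> 2*u^3"
  proof -
    have "\<bar>q*Z1\<bar> \<le> (2*u^2/M) * (M * u)" unfolding abs_mult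
      using qb Z1b M0 u0 by (intro mult_mono) auto
    then show ?thesis using M0 by (simp add: power3_eq_cube power2_eq_square)
  qed
  have t4: "\<bar>q*Z2/2\<bar> \<le> u^3"
  proof -
    have "\<bar>q*Z2\<bar> \<le> (2*u^2/M) * (M * u^2)" unfolding abs_mult
      using qb Z2b M0 u0 by (intro mult_mono) auto
    then have "\<bar>q*Z2\<bar> \<le> 2 * u^4" using M0 by (simp add: eval_nat_numeral)
    then show ?thesis using u2 by simp
  qed
  have numb: "\<bar>exp (z d) - (1/M + l + q) * S\<bar> \<le> 7 * u^3"
    unfolding num using Eb[OF d, unfolded abs_le_iff] t1[unfolded abs_le_iff] t2[unfolded abs_le_iff]
      t3[unfolded abs_le_iff] t4[unfolded abs_le_iff] unfolding abs_le_iff by linarith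
  have Slow: "S \<ge> M / 3"
  proof -
    have "exp (-1) \<ge> (1/3::real)" using exp_le by (simp add: exp_minus field_simps)
    moreover have "exp (-1) \<le> exp (z c)" if "c < m" for c
    proof -
      have "\<bar>z c\<bar> \<le> u" using zu that by blast
      then have "-1 \<le> z c" using u1 by linarith
      then show ?thesis by simp
    qed
    ultimately have "exp (z c) \<ge> 1/3" if "c < m" for c using that by (meson order_trans)
    then have "(\<Sum>c<m. (1/3::real)) \<le> S" unfolding S_def by (intro sum_mono) auto
    then show ?thesis by (simp add: M_def)
  qed
  have Spos: "S > 0" using Slow M0 by linarith
  have "exp (z d) / S - (1/M + l + q) = (exp (z d) - (1/M + l + q) * S) / S"
    using Spos by (simp add: field_simps)
  then have "\<bar>exp (z d) / S - (1/M + l + q)\<bar> = \<bar>exp (z d) - (1/M + l + q) * S\<bar> / S"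
    using Spos by simp
  also have "\<dots> \<le> 7 * u^3 / (M/3)"
    using numb Slow M0 Spos u0 by (intro frac_le) auto
  also have "\<dots> = 21 * u^3 / M" using M0 by simp
  also have "\<dots> \<le> 21 * u^3 / 1" using M0 u0 by (intro divide_left_mono) auto
  finally show ?thesis by (simp add: S_def l_def q_def M_def)
qed

lemma abs_mul_le: "\<bar>x\<bar> \<le> a \<Longrightarrow> \<bar>y\<bar> \<le> b \<Longrightarrow> \<bar>x * y\<bar> \<le> a * (b::real)"
  unfolding abs_mult by (rule mult_mono) auto

lemma prod_bound:
  fixes A1 A2 d1 d2 l1 l2 q1 q2 u :: real
  assumes d: "\<bar>d1\<bar> \<le> 1" "\<bar>d2\<bar> \<le> 1" and A: "\<bar>A1\<bar> \<le> 2" "\<bar>A2\<bar> \<le> 2"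
    and l: "\<bar>l1\<bar> \<le> 2*u" "\<bar>l2\<bar> \<le> 2*u" and q: "\<bar>q1\<bar> \<le> 2*u^2" "\<bar>q2\<bar> \<le> 2*u^2"
    and u0: "0 \<le> u"
    and R: "u \<le> 1 \<Longrightarrow> \<bar>A1 - (d1+l1+q1)\<bar> \<le> 21*u^3" "u \<le> 1 \<Longrightarrow> \<bar>A2 - (d2+l2+q2)\<bar> \<le> 21*u^3"
  shows "\<bar>A1*A2 - (d1*d2 + d2*l1 + d1*l2 + d2*q1 + d1*q2 + l1*l2)\<bar> \<le> 160 * u^3"
proof (cases "u \<le> 1")
  case True
  define T1 where "T1 = d1+l1+q1"
  define T2 where "T2 = d2+l2+q2"
  have R1: "\<bar>A1 - T1\<bar> \<le> 21*u^3" using R(1) True by (simp add: T1_def)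
  have R2: "\<bar>A2 - T2\<bar> \<le> 21*u^3" using R(2) True by (simp add: T2_def)
  have uu: "u^2 \<le> 1" "u^4 \<le> u^3" "u^2 \<le> u" using True u0
    by (auto simp: power_le_one eval_nat_numeral mult_left_le_one_le mult_le_one)
  have T1b: "\<bar>T1\<bar> \<le> 5" unfolding T1_def using d l q uu True by (auto simp: abs_le_iff)
  have e: "A1*A2 - (d1*d2 + d2*l1 + d1*l2 + d2*q1 + d1*q2 + l1*l2)
      = (A1 - T1) * A2 + T1 * (A2 - T2) + l1*q2 + q1*l2 + q1*q2"
    by (simp add: T1_def T2_def algebra_simps)
  have b1: "\<bar>(A1 - T1) * A2\<bar> \<le> 21*u^3 * 2" using R1 A by (intro abs_mul_le) auto
  have b2: "\<bar>T1 * (A2 - T2)\<bar> \<le> 5 * (21*u^3)" using R2 T1b by (intro abs_mul_le) auto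
  have b3: "\<bar>l1*q2\<bar> \<le> 2*u * (2*u^2)" using l q by (intro abs_mul_le) auto
  have b4: "\<bar>q1*l2\<bar> \<le> 2*u^2 * (2*u)" using l q by (intro abs_mul_le) auto
  have b5: "\<bar>q1*q2\<bar> \<le> 2*u^2 * (2*u^2)" using l q by (intro abs_mul_le) auto
  have p: "2*u * (2*u^2) = 4*u^3" "2*u^2 * (2*u) = 4*u^3" "2*u^2 * (2*u^2) = 4*u^4"
    by (simp_all add: eval_nat_numeral)
  show ?thesis unfolding e using b1 b2 b3 b4 b5 uu unfolding p
    by (auto simp: abs_le_iff)
next
  case False
  then have u1: "1 \<le> u" by simp
  have uu: "1 \<le> u^3" "u \<le> u^3" "u^2 \<le> u^3" using u1
    by (auto simp: eval_nat_numeral one_le_power mult_le_cancel_left1 less_1_mult order.trans[OF _ mult_right_mono[of 1 u]])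
  have b0: "\<bar>A1*A2\<bar> \<le> 2 * 2" using A by (intro abs_mul_le) auto
  have b1: "\<bar>d1*d2\<bar> \<le> 1 * 1" using d by (intro abs_mul_le) auto
  have b2: "\<bar>d2*l1\<bar> \<le> 1 * (2*u)" using d l by (intro abs_mul_le) auto
  have b3: "\<bar>d1*l2\<bar> \<le> 1 * (2*u)" using d l by (intro abs_mul_le) auto
  have b4: "\<bar>d2*q1\<bar> \<le> 1 * (2*u^2)" using d q by (intro abs_mul_le) auto
  have b5: "\<bar>d1*q2\<bar> \<le> 1 * (2*u^2)" using d q by (intro abs_mul_le) auto
  have b6: "\<bar>l1*l2\<bar> \<le> 2*u * (2*u)" using l by (intro abs_mul_le) auto
  have p: "2*u * (2*u) = 4*u^2" by (simp add: eval_nat_numeral)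
  show ?thesis using b0 b1 b2 b3 b4 b5 b6 uu unfolding p by (auto simp: abs_le_iff)
qed

lemma two_moment:
  assumes "i < n" "j < n" "k < nk"
  shows "has_bochner_integral (gauss_weights n nk) (\<lambda>w. w (True,i,k) * w (False,j,k)) 0"
proof -
  define p1 where "p1 = (True,i,k)"
  define p2 where "p2 = (False,j,k)"
  have mem: "p1 \<in> II n nk" "p2 \<in> II n nk" using assms by (auto simp: II_def p1_def p2_def)
  define c where "c q = ind p1 q + ind p2 q" for q
  have eq: "(\<Prod>q\<in>II n nk. (w q::real) ^ c q) = w p1 * w p2" for w
    unfolding c_def power_add prod.distrib using mem by (simp add: prod_ind)
  have d: "p1 \<noteq> p2" by (simp add: p1_def p2_def)
  have "(\<Prod>q\<in>II n nk. \<integral>t. t ^ c q \<partial>N1) = 0"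
    using mem d gm1 II_finite by (intro prod_zero) (auto simp: c_def ind_def intro!: bexI[of _ p1])
  then show ?thesis
    using monomial_integral[of n nk c] unfolding eq p1_def p2_def
    by (simp add: has_bochner_integral_iff)
qed

lemma EY: "has_bochner_integral (gauss_weights n nk) (\<lambda>w. Yg n nk X1 X2 w a b) 0"
proof -
  have "has_bochner_integral (gauss_weights n nk) (\<lambda>w. Yg n nk X1 X2 w a b)
     (\<Sum>i<n. \<Sum>j<n. \<Sum>k<nk. (X1 a i * X2 b j / real n) * 0)"
    unfolding Yg_def
    by (intro has_bochner_integral_sum has_bochner_integral_mult_right) (auto intro: two_moment)
  then show ?thesis by simp
qed

definition Xc :: "nat \<Rightarrow> (nat \<Rightarrow> nat \<Rightarrow> real) \<Rightarrow> nat \<Rightarrow> nat \<Rightarrow> real" where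
  "Xc m X b j = X b j - (1 / real m) * (\<Sum>c<m. X c j)"

lemma Yg_alt: "Yg n nk X1 X2 w a b = (\<Sum>j<n. X2 b j * (\<Sum>i<n. \<Sum>k<nk. X1 a i * (w (True,i,k) * w (False,j,k)) / real n))"
  unfolding Yg_def sum_distrib_left
  by (subst sum.swap) (auto intro!: sum.cong simp: mult_ac)

lemma center_sum:
  "(\<Sum>j<n. (f d j - (1 / real m) * (\<Sum>c<m. f c j)) * G j) =
   (\<Sum>j<n. f d j * G j) - (1 / real m) * (\<Sum>c<m. \<Sum>j<n. f c j * (G j::real))"
proof -
  have "(\<Sum>j<n. (\<Sum>c<m. f c j) * G j) = (\<Sum>c<m. \<Sum>j<n. f c j * G j)"
    by (simp add: sum_distrib_right) (rule sum.swap)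
  then show ?thesis
    by (simp add: left_diff_distrib sum_subtractf sum_divide_distrib[symmetric])
qed

lemma Yg_center: "Yg n nk X1 (Xc m X2) w a d = Yg n nk X1 X2 w a d - (1 / real m) * (\<Sum>c<m. Yg n nk X1 X2 w a c)"
  unfolding Yg_alt Xc_def by (rule center_sum)

lemma Vg_Vmat: "Vg n X X = Vmat n X"
  by (intro ext) (simp add: Vg_def Vmat_def)

lemma Vc_h1: "(1 / real n) * (\<Sum>i<n. X d i * ((1 / real m) * (\<Sum>c<m. X c i))) = Vxbar m n X d"
  by (simp add: Vxbar_def Vmat_def sum_distrib_left sum_distrib_right mult_ac sum.swap[of _ "{..<n}"])

lemma Vc_h2: "(1 / real n) * (\<Sum>i<n. ((1 / real m) * (\<Sum>c<m. X c i)) * ((1 / real m) * (\<Sum>c<m. X c i))) = Vxbarxbar m n X"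
proof -
  have "(\<Sum>i<n. ((1 / real m) * (\<Sum>c<m. X c i)) * ((1 / real m) * (\<Sum>c<m. X c i)))
      = (\<Sum>v<m. \<Sum>c<m. (1/(real m)^2) * (\<Sum>i<n. X v i * X c i))"
    by (simp add: sum_distrib_left sum_distrib_right power2_eq_square mult_ac sum.swap[of _ "{..<n}"])
  then show ?thesis
    by (simp add: Vxbarxbar_def Vmat_def sum_distrib_left mult_ac)
qed

lemma Vc_eq: "Vg n (Xc m X) (Xc m X) d w = Vmat n X d w - Vxbar m n X d - Vxbar m n X w + Vxbarxbar m n X"
proof -
  define xb where "xb i = (1 / real m) * (\<Sum>c<m. X c i)" for i
  have "Vg n (Xc m X) (Xc m X) d w = (1 / real n) * (\<Sum>i<n. (X d i - xb i) * (X w i - xb i))"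
    by (simp add: Vg_def Xc_def xb_def)
  also have "\<dots> = (1 / real n) * (\<Sum>i<n. X d i * X w i) - (1 / real n) * (\<Sum>i<n. X d i * xb i)
       - (1 / real n) * (\<Sum>i<n. X w i * xb i) + (1 / real n) * (\<Sum>i<n. xb i * xb i)"
    by (simp add: algebra_simps sum_subtractf sum.distrib sum_distrib_left)
  also have "\<dots> = Vmat n X d w - Vxbar m n X d - Vxbar m n X w + Vxbarxbar m n X"
    unfolding xb_def Vc_h1 Vc_h2 by (simp add: Vmat_def)
  finally show ?thesis .
qed

lemma Vxbar_mean: "(1 / real m) * (\<Sum>c<m. Vxbar m n X c) = Vxbarxbar m n X"
  by (simp add: Vxbar_def Vxbarxbar_def sum_distrib_left power2_eq_square mult_ac sum_divide_distrib)

lemma S2_eq: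
  "Vmat n X a a * (Vg n (Xc m X) (Xc m X) d d - (1 / real m) * (\<Sum>c<m. Vg n (Xc m X) (Xc m X) c c)) = S2 m n X a d"
proof -
  have "(1 / real m) * (\<Sum>c<m. Vg n (Xc m X) (Xc m X) c c)
      = (1 / real m) * (\<Sum>c<m. Vmat n X c c) - 2 * ((1 / real m) * (\<Sum>c<m. Vxbar m n X c))
        + (1 / real m) * (\<Sum>c<m. Vxbarxbar m n X)"
    unfolding Vc_eq by (simp add: sum.distrib sum_subtractf algebra_simps sum_distrib_left)
  also have "\<dots> = Vbar m n X - 2 * Vxbarxbar m n X + (if m = 0 then 0 else Vxbarxbar m n X)"
    unfolding Vxbar_mean by (simp add: Vbar_def)
  finally have e: "(1 / real m) * (\<Sum>c<m. Vg n (Xc m X) (Xc m X) c c) = \<dots>" .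
  show ?thesis
  proof (cases "m = 0")
    case True
    then show ?thesis by (simp add: S2_def Vc_eq Vxbar_def Vxbarxbar_def Vbar_def)
  next
    case False
    then show ?thesis unfolding e by (simp add: S2_def Vc_eq algebra_simps)
  qed
qed

definition Yc :: "nat \<Rightarrow> nat \<Rightarrow> nat \<Rightarrow> (nat \<Rightarrow> nat \<Rightarrow> real) \<Rightarrow> (bool \<times> nat \<times> nat \<Rightarrow> real) \<Rightarrow> nat \<Rightarrow> nat \<Rightarrow> real" where
  "Yc m n nk X w a d = Yg n nk X (Xc m X) w a d"

definition linY :: "nat \<Rightarrow> nat \<Rightarrow> nat \<Rightarrow> (nat \<Rightarrow> nat \<Rightarrow> real) \<Rightarrow> (bool \<times> nat \<times> nat \<Rightarrow> real) \<Rightarrow> nat \<Rightarrow> nat \<Rightarrow> real" where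
  "linY m n nk X w a d = (1 / real m) * Yc m n nk X w a d"

definition quadY :: "nat \<Rightarrow> nat \<Rightarrow> nat \<Rightarrow> (nat \<Rightarrow> nat \<Rightarrow> real) \<Rightarrow> (bool \<times> nat \<times> nat \<Rightarrow> real) \<Rightarrow> nat \<Rightarrow> nat \<Rightarrow> real" where
  "quadY m n nk X w a d = (1 / (2 * real m)) *
     (Yc m n nk X w a d * Yc m n nk X w a d - (1 / real m) * (\<Sum>c<m. Yc m n nk X w a c * Yc m n nk X w a c))"

lemma hYY: "has_bochner_integral (gauss_weights n nk) (\<lambda>w. Yg n nk X1 X2 w a b * Yg n nk X3 X4 w c d)
   (real nk * Vg n X1 X3 a c * Vg n X2 X4 b d)"
  using EYY intYY by (simp add: has_bochner_integral_iff)

lemma H_lin: "has_bochner_integral (gauss_weights n nk) (\<lambda>w. linY m n nk X w a d) 0"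
proof -
  have "has_bochner_integral (gauss_weights n nk) (\<lambda>w. (1/real m) * Yg n nk X (Xc m X) w a d) ((1/real m) * 0)"
    by (intro has_bochner_integral_mult_right EY)
  then show ?thesis by (simp add: linY_def Yc_def)
qed

lemma H_ll: "has_bochner_integral (gauss_weights n nk) (\<lambda>w. linY m n nk X w a d * linY m n nk X w b e)
   (real nk / (real m)^2 * S1 m n X a d b e)"
proof -
  have "has_bochner_integral (gauss_weights n nk) (\<lambda>w. (1 / (real m)^2) * (Yc m n nk X w a d * Yc m n nk X w b e))
     ((1 / (real m)^2) * (real nk * Vg n X X a b * Vg n (Xc m X) (Xc m X) d e))"
    unfolding Yc_def by (intro has_bochner_integral_mult_right hYY)
  then show ?thesis
    by (simp add: linY_def S1_def Vc_eq Vg_Vmat[of n X] power2_eq_square mult_ac)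
qed

lemma H_quad: "has_bochner_integral (gauss_weights n nk) (\<lambda>w. quadY m n nk X w a d)
   (real nk / (2 * real m) * S2 m n X a d)"
proof -
  have "has_bochner_integral (gauss_weights n nk) (\<lambda>w. quadY m n nk X w a d)
     ((1 / (2 * real m)) * (real nk * Vg n X X a a * Vg n (Xc m X) (Xc m X) d d
        - (1 / real m) * (\<Sum>c<m. real nk * Vg n X X a a * Vg n (Xc m X) (Xc m X) c c)))"
    unfolding quadY_def Yc_def
    by (intro has_bochner_integral_mult_right has_bochner_integral_diff has_bochner_integral_sum hYY)
  also have "((1 / (2 * real m)) * (real nk * Vg n X X a a * Vg n (Xc m X) (Xc m X) d d
        - (1 / real m) * (\<Sum>c<m. real nk * Vg n X X a a * Vg n (Xc m X) (Xc m X) c c)))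
      = real nk / (2 * real m) * (Vmat n X a a * (Vg n (Xc m X) (Xc m X) d d - (1 / real m) * (\<Sum>c<m. Vg n (Xc m X) (Xc m X) c c)))"
    by (simp add: Vg_Vmat[of n X] sum_distrib_left[symmetric] algebra_simps)
  finally show ?thesis unfolding S2_eq .
qed

lemma link:
  assumes "tau \<noteq> 0"
  shows "lin m (\<lambda>c. Ymat n nk X w a c / tau) d = linY m n nk X w a d / tau"
    and "quad m (\<lambda>c. Ymat n nk X w a c / tau) d = quadY m n nk X w a d / tau^2"
proof -
  have zc: "(\<lambda>c. Ymat n nk X w a c / tau) c - zbar m (\<lambda>c. Ymat n nk X w a c / tau) = Yc m n nk X w a c / tau" for c
    unfolding zbar_def Yc_def Yg_center Ymat_Yg
    by (simp add: sum_divide_distrib[symmetric] diff_divide_distrib)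
  show "lin m (\<lambda>c. Ymat n nk X w a c / tau) d = linY m n nk X w a d / tau"
    unfolding lin_def zc linY_def by simp
  show "quad m (\<lambda>c. Ymat n nk X w a c / tau) d = quadY m n nk X w a d / tau^2"
    unfolding quad_def zc quadY_def using assms
    by (simp add: power_divide sum_divide_distrib[symmetric] field_simps power2_eq_square)
qed

definition Dw :: "nat \<Rightarrow> nat \<Rightarrow> (bool \<times> nat \<times> nat \<Rightarrow> real) \<Rightarrow> real" where
  "Dw n nk w = (\<Prod>p\<in>II n nk. 1 + (w p)^2)"

lemma abs_le_1sq: "\<bar>x::real\<bar> \<le> 1 + x^2"
proof (cases "\<bar>x\<bar> \<le> 1")
  case True then show ?thesis by (simp add: add_increasing2)
next
  case False
  then have "\<bar>x\<bar> * 1 \<le> \<bar>x\<bar> * \<bar>x\<bar>" by (intro mult_left_mono) auto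
  then show ?thesis by (simp add: power2_eq_square abs_mult_self_eq)
qed

lemma Dw_ge1: "1 \<le> Dw n nk w"
  unfolding Dw_def by (intro prod_ge_1) auto

lemma abs_le_Dw:
  assumes "p \<in> II n nk"
  shows "\<bar>w p\<bar> \<le> Dw n nk w"
proof -
  have "Dw n nk w = (1 + (w p)^2) * (\<Prod>q\<in>II n nk - {p}. 1 + (w q)^2)"
    unfolding Dw_def using assms II_finite by (simp add: prod.remove)
  moreover have "1 \<le> (\<Prod>q\<in>II n nk - {p}. 1 + (w q)^2)" by (intro prod_ge_1) auto
  then have "(1 + (w p)^2) * 1 \<le> (1 + (w p)^2) * (\<Prod>q\<in>II n nk - {p}. 1 + (w q)^2)"
    by (intro mult_left_mono) auto
  ultimately have "1 + (w p)^2 \<le> Dw n nk w" by simp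
  then show ?thesis using abs_le_1sq[of "w p"] by linarith
qed

lemma abs_sum3: "\<bar>\<Sum>i\<in>A. \<Sum>j\<in>B. \<Sum>k\<in>C. f i j k\<bar> \<le> (\<Sum>i\<in>A. \<Sum>j\<in>B. \<Sum>k\<in>C. \<bar>f i j k :: real\<bar>)"
  by (rule order_trans[OF sum_abs], rule sum_mono, rule order_trans[OF sum_abs], rule sum_mono, rule sum_abs)

definition cY :: "nat \<Rightarrow> nat \<Rightarrow> (nat \<Rightarrow> nat \<Rightarrow> real) \<Rightarrow> nat \<Rightarrow> nat \<Rightarrow> real" where
  "cY n nk X a c = (\<Sum>i<n. \<Sum>j<n. \<Sum>k<nk. \<bar>X a i * X c j / real n\<bar>)"

lemma Ymat_bound: "\<bar>Ymat n nk X w a c\<bar> \<le> cY n nk X a c * (Dw n nk w)^2"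
proof -
  have "\<bar>Ymat n nk X w a c\<bar> \<le> (\<Sum>i<n. \<Sum>j<n. \<Sum>k<nk. \<bar>(X a i * X c j / real n) * (w (True,i,k) * w (False,j,k))\<bar>)"
    unfolding Ymat_Yg Yg_def by (rule abs_sum3)
  also have "\<dots> \<le> (\<Sum>i<n. \<Sum>j<n. \<Sum>k<nk. \<bar>X a i * X c j / real n\<bar> * (Dw n nk w * Dw n nk w))"
  proof (intro sum_mono)
    fix i j k assume "i \<in> {..<n}" "j \<in> {..<n}" "k \<in> {..<nk}"
    then have "(True,i,k) \<in> II n nk" "(False,j,k) \<in> II n nk" by (auto simp: II_def)
    then have "\<bar>w (True,i,k) * w (False,j,k)\<bar> \<le> Dw n nk w * Dw n nk w"
      by (intro abs_mul_le abs_le_Dw)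
    then show "\<bar>(X a i * X c j / real n) * (w (True,i,k) * w (False,j,k))\<bar> \<le> \<bar>X a i * X c j / real n\<bar> * (Dw n nk w * Dw n nk w)"
      unfolding abs_mult[of "X a i * X c j / real n"] by (intro mult_left_mono) auto
  qed
  also have "\<dots> = cY n nk X a c * (Dw n nk w)^2"
    by (simp only: cY_def sum_distrib_right power2_eq_square)
  finally show ?thesis .
qed

lemma D6_int: "integrable (gauss_weights n nk) (\<lambda>w. Dw n nk w ^ 6)"
proof -
  interpret product_prob_space "\<lambda>_. N1" by (rule pps)
  have e: "(\<lambda>t::real. (1 + t^2)^6) = (\<lambda>t. \<Sum>k\<le>6. of_nat (6 choose k) * t^(2*k))"
  proof (rule ext)
    fix t :: real
    show "(1 + t^2)^6 = (\<Sum>k\<le>6. of_nat (6 choose k) * t^(2*k))"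
      using binomial_ring[of "t^2" "1::real" 6] by (simp add: add.commute power_mult)
  qed
  have "integrable N1 (\<lambda>t::real. (1 + t^2)^6)"
    unfolding e by (auto intro!: Bochner_Integration.integrable_sum Bochner_Integration.integrable_mult_right N1_int_pow)
  then have "integrable (PiM (II n nk) (\<lambda>_. N1)) (\<lambda>w. \<Prod>p\<in>II n nk. (1 + (w p)^2)^6)"
    using product_integrable_prod[of "II n nk" "\<lambda>p t. (1 + t^2)^6"] II_finite by simp
  then show ?thesis unfolding gw_def Dw_def prod_power_distrib .
qed

lemma Ymat_meas: "(\<lambda>w. Ymat n nk X w a c) \<in> borel_measurable (gauss_weights n nk)"
proof -
  have "integrable (gauss_weights n nk) (\<lambda>w. Yg n nk X X w a c)"
    using EY[of n nk X X a c] by (simp add: has_bochner_integral_iff)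
  then show ?thesis unfolding Ymat_Yg by (rule borel_measurable_integrable)
qed

lemma Amat_meas: "(\<lambda>w. Amat m n nk X tau w a d) \<in> borel_measurable (gauss_weights n nk)"
proof -
  have e: "(\<lambda>w. exp (Ymat n nk X w a c / tau)) \<in> borel_measurable (gauss_weights n nk)" for c
    by (intro borel_measurable_continuous_on[OF continuous_on_exp[OF continuous_on_id]]
        borel_measurable_divide Ymat_meas borel_measurable_const)
  show ?thesis unfolding Amat_def softmax_rows_def
    by (intro borel_measurable_add borel_measurable_diff borel_measurable_divide borel_measurable_sum e
        borel_measurable_const)
qed

lemma Amat_bound:
  assumes "m > 0" "d < m"
  shows "\<bar>Amat m n nk X tau w a d\<bar> \<le> 2"
proof -
  define z where "z c = Ymat n nk X w a c / tau" for c
  have pos: "0 < exp (z d)" by simp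
  have le: "exp (z d) \<le> (\<Sum>c<m. exp (z c))"
    using assms by (intro member_le_sum) auto
  have Sp: "0 < (\<Sum>c<m. exp (z c))" using assms by (intro sum_pos) auto
  have s0: "0 \<le> exp (z d) / (\<Sum>c<m. exp (z c))" using Sp pos by simp
  have s1: "exp (z d) / (\<Sum>c<m. exp (z c)) \<le> 1" using Sp le by simp
  have k: "0 \<le> kdelta a d" "kdelta a d \<le> 1" by (auto simp: kdelta_def)
  have mm: "0 < 1 / real m" "1 / real m \<le> 1" using assms by auto
  show ?thesis unfolding Amat_def softmax_rows_def z_def[symmetric]
    using s0 s1 k mm unfolding abs_le_iff by linarith
qed

theorem lemmaC3:
  fixes m n nk :: nat and X :: "nat \<Rightarrow> nat \<Rightarrow> real" and \<alpha> \<delta> \<beta> \<omega> :: nat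
  assumes "m > 0" and "n > 0" and "nk > 0"
    and "\<alpha> < m" and "\<delta> < m" and "\<beta> < m" and "\<omega> < m"
  shows "\<exists>C. \<forall>\<^sub>F tau in at_top.
     \<bar>(\<integral>w. Amat m n nk X tau w \<alpha> \<delta> * Amat m n nk X tau w \<beta> \<omega> \<partial>gauss_weights n nk)
      - (kdelta \<alpha> \<delta> * kdelta \<beta> \<omega>
         + real nk / (tau^2 * (real m)^2) * S1 m n X \<alpha> \<delta> \<beta> \<omega>
         + real nk / (2 * tau^2 * real m) *
             (kdelta \<beta> \<omega> * S2 m n X \<alpha> \<delta> + kdelta \<alpha> \<delta> * S2 m n X \<beta> \<omega>))\<bar>
     \<le> C * real nk / tau^3"
proof -
  note mp = assms(1) and nkp = assms(3) and ab = assms(4-7)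
  let ?M = "gauss_weights n nk"
  interpret prob_space ?M by (rule gw_prob)
  define K where "K = (\<Sum>a<m. \<Sum>c<m. cY n nk X a c)"
  define G where "G = (\<integral>w. Dw n nk w ^ 6 \<partial>?M)"
  have cY_nn: "0 \<le> cY n nk X a c" for a c by (simp add: cY_def sum_nonneg)
  have cY_le: "cY n nk X a c \<le> K" if "a < m" "c < m" for a c
  proof -
    have "cY n nk X a c \<le> (\<Sum>c<m. cY n nk X a c)"
      using that cY_nn by (intro member_le_sum) auto
    also have "\<dots> \<le> K" unfolding K_def
      using that cY_nn by (intro member_le_sum[of a "{..<m}" "\<lambda>a. \<Sum>c<m. cY n nk X a c"] sum_nonneg) auto
    finally show ?thesis .
  qed
  have K0: "0 \<le> K" unfolding K_def using cY_nn by (intro sum_nonneg) auto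
  define d1 where "d1 = kdelta \<alpha> \<delta>"
  define d2 where "d2 = kdelta \<beta> \<omega>"
  have dd: "\<bar>d1\<bar> \<le> 1" "\<bar>d2\<bar> \<le> 1" by (auto simp: d1_def d2_def kdelta_def)
  have main: "\<bar>(\<integral>w. Amat m n nk X tau w \<alpha> \<delta> * Amat m n nk X tau w \<beta> \<omega> \<partial>?M)
      - (d1 * d2 + real nk / (tau^2 * (real m)^2) * S1 m n X \<alpha> \<delta> \<beta> \<omega>
         + real nk / (2 * tau^2 * real m) * (d2 * S2 m n X \<alpha> \<delta> + d1 * S2 m n X \<beta> \<omega>))\<bar>
     \<le> 160 * K^3 * G / tau^3" if tp: "tau > 0" for tau
  proof -
    define F where "F w = Amat m n nk X tau w \<alpha> \<delta> * Amat m n nk X tau w \<beta> \<omega>" for w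
    define P where "P w = d1 * d2 + d2 * (linY m n nk X w \<alpha> \<delta> / tau) + d1 * (linY m n nk X w \<beta> \<omega> / tau)
       + d2 * (quadY m n nk X w \<alpha> \<delta> / tau^2) + d1 * (quadY m n nk X w \<beta> \<omega> / tau^2)
       + (linY m n nk X w \<alpha> \<delta> * linY m n nk X w \<beta> \<omega>) / tau^2" for w
    have hc: "has_bochner_integral ?M (\<lambda>w. d1 * d2) (d1 * d2)"
      by (simp add: has_bochner_integral_iff prob_space)
    have hP: "has_bochner_integral ?M P
      (d1 * d2 + d2 * (0 / tau) + d1 * (0 / tau)
       + d2 * (real nk / (2 * real m) * S2 m n X \<alpha> \<delta> / tau^2) + d1 * (real nk / (2 * real m) * S2 m n X \<beta> \<omega> / tau^2)
       + (real nk / (real m)^2 * S1 m n X \<alpha> \<delta> \<beta> \<omega>) / tau^2)"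
      unfolding P_def
      by (intro has_bochner_integral_add has_bochner_integral_mult_right has_bochner_integral_divide_zero
          hc H_lin H_quad H_ll)
    have val: "d1 * d2 + d2 * (0 / tau) + d1 * (0 / tau)
       + d2 * (real nk / (2 * real m) * S2 m n X \<alpha> \<delta> / tau^2) + d1 * (real nk / (2 * real m) * S2 m n X \<beta> \<omega> / tau^2)
       + (real nk / (real m)^2 * S1 m n X \<alpha> \<delta> \<beta> \<omega>) / tau^2
      = d1 * d2 + real nk / (tau^2 * (real m)^2) * S1 m n X \<alpha> \<delta> \<beta> \<omega>
         + real nk / (2 * tau^2 * real m) * (d2 * S2 m n X \<alpha> \<delta> + d1 * S2 m n X \<beta> \<omega>)"
      using tp mp by (simp add: field_simps)
    have intP: "integrable ?M P" and intPv: "integral\<^sup>L ?M P = d1 * d2 + real nk / (tau^2 * (real m)^2) * S1 m n X \<alpha> \<delta> \<beta> \<omega>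
         + real nk / (2 * tau^2 * real m) * (d2 * S2 m n X \<alpha> \<delta> + d1 * S2 m n X \<beta> \<omega>)"
      using hP unfolding val by (auto simp: has_bochner_integral_iff)
    have intF: "integrable ?M F"
    proof (rule integrable_const_bound[where B = 4])
      show "AE w in ?M. norm (F w) \<le> 4"
      proof (intro AE_I2)
        fix w
        have "\<bar>F w\<bar> \<le> 2 * 2" unfolding F_def
          by (intro abs_mul_le Amat_bound mp ab)
        then show "norm (F w) \<le> 4" by simp
      qed
      show "F \<in> borel_measurable ?M" unfolding F_def
        by (intro borel_measurable_times Amat_meas)
    qed
    have intG: "integrable ?M (\<lambda>w. 160 * K^3 * Dw n nk w ^ 6 / tau^3)"
      by (intro Bochner_Integration.integrable_divide Bochner_Integration.integrable_mult_right D6_int)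
    have pw: "\<bar>F w - P w\<bar> \<le> 160 * K^3 * Dw n nk w ^ 6 / tau^3" for w
    proof -
      define u where "u = K * (Dw n nk w)^2 / tau"
      have u0: "0 \<le> u" unfolding u_def using K0 tp by simp
      define z1 where "z1 c = Ymat n nk X w \<alpha> c / tau" for c
      define z2 where "z2 c = Ymat n nk X w \<beta> c / tau" for c
      have zb: "\<bar>Ymat n nk X w a c / tau\<bar> \<le> u" if "a < m" "c < m" for a c
      proof -
        have "\<bar>Ymat n nk X w a c\<bar> \<le> cY n nk X a c * (Dw n nk w)^2" by (rule Ymat_bound)
        also have "\<dots> \<le> K * (Dw n nk w)^2" using cY_le[OF that] by (intro mult_right_mono) auto
        finally show ?thesis unfolding u_def using tp by (simp add: abs_div divide_right_mono)
      qed
      have zu1: "\<forall>c<m. \<bar>z1 c\<bar> \<le> u" unfolding z1_def using zb ab by auto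
      have zu2: "\<forall>c<m. \<bar>z2 c\<bar> \<le> u" unfolding z2_def using zb ab by auto
      have A1: "Amat m n nk X tau w \<alpha> \<delta> = d1 + exp (z1 \<delta>) / (\<Sum>c<m. exp (z1 c)) - 1 / real m"
        by (simp add: Amat_def softmax_rows_def z1_def d1_def)
      have A2: "Amat m n nk X tau w \<beta> \<omega> = d2 + exp (z2 \<omega>) / (\<Sum>c<m. exp (z2 c)) - 1 / real m"
        by (simp add: Amat_def softmax_rows_def z2_def d2_def)
      have pb: "\<bar>Amat m n nk X tau w \<alpha> \<delta> * Amat m n nk X tau w \<beta> \<omega>
          - (d1*d2 + d2*lin m z1 \<delta> + d1*lin m z2 \<omega> + d2*quad m z1 \<delta> + d1*quad m z2 \<omega> + lin m z1 \<delta> * lin m z2 \<omega>)\<bar>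
          \<le> 160 * u^3"
      proof (rule prod_bound[OF dd])
        show "\<bar>Amat m n nk X tau w \<alpha> \<delta>\<bar> \<le> 2" by (intro Amat_bound mp ab)
        show "\<bar>Amat m n nk X tau w \<beta> \<omega>\<bar> \<le> 2" by (intro Amat_bound mp ab)
        show "\<bar>lin m z1 \<delta>\<bar> \<le> 2 * u" by (rule lin_bound(2)[OF mp zu1 ab(2)])
        show "\<bar>lin m z2 \<omega>\<bar> \<le> 2 * u" by (rule lin_bound(2)[OF mp zu2 ab(4)])
        show "\<bar>quad m z1 \<delta>\<bar> \<le> 2 * u^2" by (rule quad_bound(2)[OF mp zu1 ab(2)])
        show "\<bar>quad m z2 \<omega>\<bar> \<le> 2 * u^2" by (rule quad_bound(2)[OF mp zu2 ab(4)])
        show "0 \<le> u" by (rule u0)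
        show "\<bar>Amat m n nk X tau w \<alpha> \<delta> - (d1 + lin m z1 \<delta> + quad m z1 \<delta>)\<bar> \<le> 21 * u^3" if "u \<le> 1"
          using soft_taylor[OF mp ab(2) zu1 that] unfolding A1 by (simp add: algebra_simps)
        show "\<bar>Amat m n nk X tau w \<beta> \<omega> - (d2 + lin m z2 \<omega> + quad m z2 \<omega>)\<bar> \<le> 21 * u^3" if "u \<le> 1"
          using soft_taylor[OF mp ab(4) zu2 that] unfolding A2 by (simp add: algebra_simps)
      qed
      have l1: "lin m z1 \<delta> = linY m n nk X w \<alpha> \<delta> / tau" "quad m z1 \<delta> = quadY m n nk X w \<alpha> \<delta> / tau^2"
        unfolding z1_def using tp by (simp_all add: link)
      have l2: "lin m z2 \<omega> = linY m n nk X w \<beta> \<omega> / tau" "quad m z2 \<omega> = quadY m n nk X w \<beta> \<omega> / tau^2"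
        unfolding z2_def using tp by (simp_all add: link)
      have "F w - P w = Amat m n nk X tau w \<alpha> \<delta> * Amat m n nk X tau w \<beta> \<omega>
          - (d1*d2 + d2*lin m z1 \<delta> + d1*lin m z2 \<omega> + d2*quad m z1 \<delta> + d1*quad m z2 \<omega> + lin m z1 \<delta> * lin m z2 \<omega>)"
        unfolding F_def P_def l1 l2 by (simp add: power2_eq_square)
      moreover have "160 * u^3 = 160 * K^3 * Dw n nk w ^ 6 / tau^3"
        unfolding u_def by (simp add: power_divide power_mult_distrib flip: power_mult)
      ultimately show ?thesis using pb by simp
    qed
    have "(\<integral>w. Amat m n nk X tau w \<alpha> \<delta> * Amat m n nk X tau w \<beta> \<omega> \<partial>?M) - integral\<^sup>L ?M P
        = (\<integral>w. F w - P w \<partial>?M)"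
      unfolding F_def[symmetric] using intF intP by simp
    then have "\<bar>(\<integral>w. Amat m n nk X tau w \<alpha> \<delta> * Amat m n nk X tau w \<beta> \<omega> \<partial>?M) - integral\<^sup>L ?M P\<bar>
        = \<bar>\<integral>w. F w - P w \<partial>?M\<bar>" by simp
    also have "\<dots> \<le> (\<integral>w. \<bar>F w - P w\<bar> \<partial>?M)"
      using integral_norm_bound[of ?M "\<lambda>w. F w - P w"] by simp
    also have "\<dots> \<le> (\<integral>w. 160 * K^3 * Dw n nk w ^ 6 / tau^3 \<partial>?M)"
      using intF intP intG pw by (intro integral_mono) auto
    also have "\<dots> = 160 * K^3 * G / tau^3" unfolding G_def by simp
    finally show ?thesis unfolding intPv .
  qed
  show ?thesis
  proof (intro exI[of _ "160 * K^3 * G / real nk"] eventually_mono[OF eventually_gt_at_top[of 0]])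
    fix tau :: real assume "tau > 0"
    then show "\<bar>(\<integral>w. Amat m n nk X tau w \<alpha> \<delta> * Amat m n nk X tau w \<beta> \<omega> \<partial>?M)
      - (kdelta \<alpha> \<delta> * kdelta \<beta> \<omega>
         + real nk / (tau^2 * (real m)^2) * S1 m n X \<alpha> \<delta> \<beta> \<omega>
         + real nk / (2 * tau^2 * real m) *
             (kdelta \<beta> \<omega> * S2 m n X \<alpha> \<delta> + kdelta \<alpha> \<delta> * S2 m n X \<beta> \<omega>))\<bar>
     \<le> 160 * K^3 * G / real nk * real nk / tau^3"
      using main[of tau] nkp unfolding d1_def d2_def by simp
  qed
qed

end
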